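(* Let $p>0$ and let $(u_n)_{n\ge0}$ be a sequence in $E^1$ with partial sums $s_n=\sum_{k=0}^n u_k$. If the series $\sum u_n$ is $E_p$ summable to $\nu\in E^1$ and $\sqrt{n}\,D(u_n,\overline{0})\to0$ as $n\to\infty$, then $\sum u_n=\nu$, i.e. $D(s_n,\nu)\to0$.
   Context: $E^1$ denotes the set of fuzzy numbers: functions $u:\mathbb{R}\to[0,1]$ that are normal, fuzzy convex, upper semicontinuous, and have compact support $\overline{\{t:u(t)>0\}}$. For $\alpha\in(0,1]$ the $\alpha$-level set is $[u]_\alpha=\{t:u(t)\ge\alpha\}$ and $[u]_0=\overline{\{t:u(t)>0\}}$; each is a compact interval $[u^-_\alpha,u^+_\alpha]$. Addition and scalar multiplication are defined levelwise: $[u+v]_\alpha=[u^-_\alpha+v^-_\alpha,u^+_\alpha+v^+_\alpha]$ and $[ku]_\alpha=k[u]_\alpha$ for $k\in\mathbb{R}$. The metric is $D(u,v)=\sup_{\alpha\in[0,1]}\max\{|u^-_\alpha-v^-_\alpha|,|u^+_\alpha-v^+_\alpha|\}$. $\overline{0}$ is the fuzzy number equal to $1$ at $0$ and $0$ elsewhere. A series $\sum u_n$ of fuzzy numbers is $E_p$ summable to $\nu$ if its sequence of partial sums $(s_n)$ has Euler means $\frac{1}{(p+1)^n}\sum_{k=0}^n\binom{n}{k}p^{n-k}s_k$ converging to $\nu$ in $D$. *)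

theory Defs
  imports "HOL-Analysis.Analysis"
begin

definition level :: "(real \<Rightarrow> real) \<Rightarrow> real \<Rightarrow> real set" where
  "level u \<alpha> = (if \<alpha> = 0 then closure {t. u t > 0} else {t. \<alpha> \<le> u t})"

definition lowerE :: "(real \<Rightarrow> real) \<Rightarrow> real \<Rightarrow> real" where
  "lowerE u \<alpha> = Inf (level u \<alpha>)"

definition upperE :: "(real \<Rightarrow> real) \<Rightarrow> real \<Rightarrow> real" where
  "upperE u \<alpha> = Sup (level u \<alpha>)"

definition E1 :: "(real \<Rightarrow> real) set" where
  "E1 = {u. (\<forall>t. 0 \<le> u t \<and> u t \<le> 1)
          \<and> (\<exists>t. u t = 1)
          \<and> (\<forall>x y c. 0 \<le> c \<and> c \<le> 1 \<longrightarrow> min (u x) (u y) \<le> u (c * x + (1 - c) * y))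
          \<and> (\<forall>x \<epsilon>. \<epsilon> > 0 \<longrightarrow> (\<exists>\<delta>>0. \<forall>y. \<bar>y - x\<bar> < \<delta> \<longrightarrow> u y < u x + \<epsilon>))
          \<and> compact (closure {t. u t > 0})}"

(* levelwise addition: [u+v]_alpha = [u]_alpha + [v]_alpha *)
definition fplus :: "(real \<Rightarrow> real) \<Rightarrow> (real \<Rightarrow> real) \<Rightarrow> (real \<Rightarrow> real)" where
  "fplus u v = (\<lambda>t. Sup ({0} \<union> {\<alpha>. 0 < \<alpha> \<and> \<alpha> \<le> 1 \<and>
        (\<exists>a b. a \<in> level u \<alpha> \<and> b \<in> level v \<alpha> \<and> t = a + b)}))"

(* levelwise scalar multiplication: [k u]_alpha = k [u]_alpha *)
definition fscale :: "real \<Rightarrow> (real \<Rightarrow> real) \<Rightarrow> (real \<Rightarrow> real)" where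
  "fscale k u = (\<lambda>t. Sup ({0} \<union> {\<alpha>. 0 < \<alpha> \<and> \<alpha> \<le> 1 \<and>
        (\<exists>a. a \<in> level u \<alpha> \<and> t = k * a)}))"

definition fzero :: "real \<Rightarrow> real" where
  "fzero = (\<lambda>t. if t = 0 then 1 else 0)"

definition fdist :: "(real \<Rightarrow> real) \<Rightarrow> (real \<Rightarrow> real) \<Rightarrow> real" where
  "fdist u v = (SUP \<alpha>\<in>{0..1}. max \<bar>lowerE u \<alpha> - lowerE v \<alpha>\<bar> \<bar>upperE u \<alpha> - upperE v \<alpha>\<bar>)"

fun fsum_upto :: "(nat \<Rightarrow> real \<Rightarrow> real) \<Rightarrow> nat \<Rightarrow> (real \<Rightarrow> real)" where
  "fsum_upto w 0 = w 0"
| "fsum_upto w (Suc n) = fplus (fsum_upto w n) (w (Suc n))"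

definition psum :: "(nat \<Rightarrow> real \<Rightarrow> real) \<Rightarrow> nat \<Rightarrow> (real \<Rightarrow> real)" where
  "psum u n = fsum_upto u n"

definition euler_mean :: "real \<Rightarrow> (nat \<Rightarrow> real \<Rightarrow> real) \<Rightarrow> nat \<Rightarrow> (real \<Rightarrow> real)" where
  "euler_mean p s n = fsum_upto (\<lambda>k. fscale (real (n choose k) * p ^ (n - k) / (p + 1) ^ n) (s k)) n"

definition Ep_summable_to :: "real \<Rightarrow> (nat \<Rightarrow> real \<Rightarrow> real) \<Rightarrow> (real \<Rightarrow> real) \<Rightarrow> bool" where
  "Ep_summable_to p u \<nu> \<longleftrightarrow> (\<lambda>n. fdist (euler_mean p (psum u) n) \<nu>) \<longlonglongrightarrow> 0"

end

theory Submission
  imports Defs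
begin


lemma M0: "(\<Sum>k\<le>n. real (n choose k) * (p::real)^(n-k)) = (p+1)^n"
  using binomial_ring[of 1 p n] by (simp add: add.commute)

lemma M1: "(\<Sum>k\<le>n. real k * real (n choose k) * (p::real)^(n-k)) = real n * (p+1)^(n-1)"
proof (cases n)
  case 0 then show ?thesis by simp
next
  case (Suc m)
  have "(\<Sum>k\<le>Suc m. real k * real (Suc m choose k) * p^(Suc m-k))
      = (\<Sum>i\<le>m. real (Suc i) * real (Suc m choose Suc i) * p^(m-i))"
    by (subst sum.atMost_Suc_shift) simp
  also have "\<dots> = (\<Sum>i\<le>m. real (Suc m) * (real (m choose i) * p^(m-i)))"
  proof (rule sum.cong)
    fix i assume "i \<in> {..m}"
    have "real (Suc i) * real (Suc m choose Suc i) = real (Suc m) * real (m choose i)"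
      using Suc_times_binomial[of i m] by (metis of_nat_mult)
    then show "real (Suc i) * real (Suc m choose Suc i) * p^(m-i) = real (Suc m) * (real (m choose i) * p^(m-i))"
      by simp
  qed simp
  also have "\<dots> = real (Suc m) * (p+1)^m" by (simp add: sum_distrib_left[symmetric] M0)
  finally show ?thesis using Suc by simp
qed

lemma M2: "(\<Sum>k\<le>n. real k * (real k - 1) * real (n choose k) * (p::real)^(n-k)) = real n * (real n - 1) * (p+1)^(n-2)"
proof (cases n)
  case 0 then show ?thesis by simp
next
  case (Suc m)
  note nm = Suc
  show ?thesis
  proof (cases m)
    case 0 then show ?thesis using nm by (simp add: atMost_Suc)
  next
    case (Suc l)
    have "(\<Sum>k\<le>Suc (Suc l). real k * (real k - 1) * real (Suc (Suc l) choose k) * p^(Suc (Suc l)-k))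
      = (\<Sum>i\<le>l. real (Suc (Suc i)) * real (Suc i) * real (Suc (Suc l) choose Suc (Suc i)) * p^(l-i))"
      by (simp only: sum.atMost_Suc_shift) (simp del: binomial_Suc_Suc)
    also have "\<dots> = (\<Sum>i\<le>l. real (Suc (Suc l)) * real (Suc l) * (real (l choose i) * p^(l-i)))"
    proof (rule sum.cong)
      fix i assume "i \<in> {..l}"
      have a: "real (Suc (Suc i)) * real (Suc (Suc l) choose Suc (Suc i)) = real (Suc (Suc l)) * real (Suc l choose Suc i)"
        using Suc_times_binomial[of "Suc i" "Suc l"] by (metis of_nat_mult)
      have b: "real (Suc i) * real (Suc l choose Suc i) = real (Suc l) * real (l choose i)"
        using Suc_times_binomial[of i l] by (metis of_nat_mult)
      have "real (Suc (Suc i)) * real (Suc i) * real (Suc (Suc l) choose Suc (Suc i))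
          = real (Suc (Suc l)) * (real (Suc i) * real (Suc l choose Suc i))"
        using a by (simp only: ac_simps)
      also have "\<dots> = real (Suc (Suc l)) * real (Suc l) * real (l choose i)" using b by simp
      finally show "real (Suc (Suc i)) * real (Suc i) * real (Suc (Suc l) choose Suc (Suc i)) * p^(l-i)
          = real (Suc (Suc l)) * real (Suc l) * (real (l choose i) * p^(l-i))" by simp
    qed simp
    also have "\<dots> = real (Suc (Suc l)) * real (Suc l) * (p+1)^l"
      by (simp add: sum_distrib_left[symmetric] M0)
    finally show ?thesis using nm Suc by simp
  qed
qed



definition cw :: "real \<Rightarrow> nat \<Rightarrow> nat \<Rightarrow> real" where
  "cw p n k = real (n choose k) * p^(n-k) / (p+1)^n"

lemma cw_nonneg: "p > 0 \<Longrightarrow> cw p n k \<ge> 0" by (simp add: cw_def)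

lemma cw_sum: "p > 0 \<Longrightarrow> (\<Sum>k\<le>n. cw p n k) = 1"
  using M0[of n p] by (simp add: cw_def sum_divide_distrib[symmetric])

lemma M1': "p > 0 \<Longrightarrow> (\<Sum>k\<le>n. cw p n k * real k) = real n / (p+1)"
proof -
  assume p: "p > 0"
  have "(\<Sum>k\<le>n. cw p n k * real k) = (\<Sum>k\<le>n. real k * real (n choose k) * p^(n-k)) / (p+1)^n"
    by (simp add: cw_def sum_divide_distrib[symmetric] algebra_simps)
  also have "\<dots> = real n * (p+1)^(n-1) / (p+1)^n" by (simp add: M1)
  also have "\<dots> = real n / (p+1)"
  proof (cases n)
    case (Suc m)
    have "(p+1)^m \<noteq> 0" using p by simp
    then show ?thesis using Suc p by (simp only: power_Suc) simp
  qed simp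
  finally show ?thesis .
qed

lemma M2': "p > 0 \<Longrightarrow> (\<Sum>k\<le>n. cw p n k * (real k * (real k - 1))) = real n * (real n - 1) / (p+1)^2"
proof -
  assume p: "p > 0"
  have "(\<Sum>k\<le>n. cw p n k * (real k * (real k - 1))) = (\<Sum>k\<le>n. real k * (real k - 1) * real (n choose k) * p^(n-k)) / (p+1)^n"
    by (simp add: cw_def sum_divide_distrib[symmetric] algebra_simps)
  also have "\<dots> = real n * (real n - 1) * (p+1)^(n-2) / (p+1)^n" by (simp add: M2)
  also have "\<dots> = real n * (real n - 1) / (p+1)^2"
  proof (cases "n \<ge> 2")
    case True
    then obtain m where "n = m + 2" by (metis le_add_diff_inverse2)
    have "(p+1)^m \<noteq> 0" using p by simp
    then show ?thesis using p \<open>n = m + 2\<close> by (simp only: power_add) (simp add: power2_eq_square)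
  next
    case False
    then have "n = 0 \<or> n = 1" by auto
    then show ?thesis by auto
  qed
  finally show ?thesis .
qed

lemma second_moment: "p > 0 \<Longrightarrow>
  (\<Sum>k\<le>n. cw p n k * (real k - x)^2) = (real n/(p+1) - x)^2 + real n/(p+1) * (1 - 1/(p+1))"
proof -
  assume p: "p > 0"
  have e: "\<And>k. cw p n k * (real k - x)^2 = cw p n k * (real k * (real k - 1)) + (1 - 2*x) * (cw p n k * real k) + x^2 * cw p n k"
    by (simp add: algebra_simps power2_eq_square)
  have "(\<Sum>k\<le>n. cw p n k * (real k - x)^2) = real n * (real n - 1) / (p+1)^2 + (1-2*x) * (real n/(p+1)) + x^2"
    by (simp only: e sum.distrib sum_distrib_left[symmetric] M1'[OF p] M2'[OF p] cw_sum[OF p])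
  also have "\<dots> = (real n/(p+1) - x)^2 + real n/(p+1) * (1 - 1/(p+1))"
  proof -
    define a where "a = 1/(p+1)"
    have h1: "real n/(p+1) = real n * a" by (simp add: a_def)
    have h2: "real n * (real n - 1) / (p+1)^2 = real n * (real n - 1) * a^2" by (simp add: a_def power2_eq_square)
    show ?thesis unfolding h1 h2 a_def[symmetric] by (simp add: algebra_simps power2_eq_square)
  qed
  finally show ?thesis .
qed

definition nn :: "real \<Rightarrow> nat \<Rightarrow> nat" where "nn p m = nat \<lceil>real m * (p+1)\<rceil>"

lemma nn_real: "p > 0 \<Longrightarrow> real (nn p m) = real_of_int \<lceil>real m * (p+1)\<rceil>"
proof -
  assume p: "p > 0"
  have "0 \<le> real m * (p+1)" using p by simp
  then have "0 \<le> \<lceil>real m * (p+1)\<rceil>" by linarith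
  then show ?thesis unfolding nn_def by simp
qed

lemma nn_bounds: "p > 0 \<Longrightarrow> real m \<le> real (nn p m)/(p+1) \<and> real (nn p m)/(p+1) \<le> real m + 1"
proof -
  assume p: "p > 0"
  have c1: "real m * (p+1) \<le> real (nn p m)" unfolding nn_real[OF p] by linarith
  have c2: "real (nn p m) \<le> real m * (p+1) + (p+1)" unfolding nn_real[OF p] using p by linarith
  have "real m \<le> real (nn p m)/(p+1)" using c1 p by (simp add: pos_le_divide_eq)
  moreover have "real (nn p m)/(p+1) \<le> real m + 1" using c2 p by (simp add: pos_divide_le_eq algebra_simps)
  ultimately show ?thesis by blast
qed

lemma nn_ge: "p > 0 \<Longrightarrow> nn p m \<ge> m"
proof -
  assume p: "p > 0"
  have "real m \<le> real (nn p m)/(p+1)" using nn_bounds[OF p] by blast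
  also have "\<dots> \<le> real (nn p m)" using p mult_left_mono[of 1 "p+1" "real (nn p m)"] by (simp add: divide_le_eq)
  finally show ?thesis by simp
qed

lemma S_bound: "p > 0 \<Longrightarrow> m \<ge> 1 \<Longrightarrow> (\<Sum>k\<le>nn p m. cw p (nn p m) k * (real k - real m)^2) \<le> 3 * real m"
proof -
  assume p: "p > 0" and m: "m \<ge> 1"
  define y where "y = real (nn p m)/(p+1)"
  have b: "real m \<le> y" "y \<le> real m + 1" using nn_bounds[OF p, of m] by (auto simp: y_def)
  have q: "0 \<le> 1 - 1/(p+1)" "1 - 1/(p+1) \<le> 1" using p by (auto simp: field_simps)
  have "(\<Sum>k\<le>nn p m. cw p (nn p m) k * (real k - real m)^2) = (y - real m)^2 + y * (1 - 1/(p+1))"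
    using second_moment[OF p] by (simp add: y_def)
  also have "\<dots> \<le> 1 + y"
  proof -
    have "(y - real m)^2 \<le> 1" using b using b power_le_one[of "y - real m" 2] by simp
    moreover have "y * (1 - 1/(p+1)) \<le> y" using q b mult_left_le[of "1 - 1/(p+1)" y] by auto
    ultimately show ?thesis by linarith
  qed
  also have "\<dots> \<le> 3 * real m" using b m by simp
  finally show ?thesis .
qed



lemma sqrt_step: "1 / sqrt (real (Suc b)) \<le> 2 * (sqrt (real (Suc b)) - sqrt (real b))"
proof -
  define x where "x = sqrt (real (Suc b))"
  define y where "y = sqrt (real b)"
  have x: "x > 0" by (simp add: x_def)
  have y: "0 \<le> y" "y \<le> x" by (auto simp: x_def y_def)
  have "(x - y) * (x + y) = 1" by (simp add: x_def y_def algebra_simps power2_eq_square[symmetric])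
  then have "1 = (x - y) * (x + y)" by simp
  also have "\<dots> \<le> (x - y) * (2 * x)" using y by (intro mult_left_mono) auto
  finally have "1 \<le> 2 * (x - y) * x" by (simp add: algebra_simps)
  then have "1 / x \<le> 2 * (x - y)" using x by (simp add: pos_divide_le_eq)
  then show ?thesis by (simp add: x_def y_def)
qed

lemma sqrt_sum: "a \<le> b \<Longrightarrow> (\<Sum>j\<in>{a<..b}. 1 / sqrt (real j)) \<le> 2 * (sqrt (real b) - sqrt (real a))"
proof (induction b rule: dec_induct)
  case base then show ?case by simp
next
  case (step b)
  have "{a<..Suc b} = insert (Suc b) {a<..b}" using step by auto
  then have "(\<Sum>j\<in>{a<..Suc b}. 1 / sqrt (real j)) = 1 / sqrt (real (Suc b)) + (\<Sum>j\<in>{a<..b}. 1 / sqrt (real j))"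
    by simp
  also have "\<dots> \<le> 2 * (sqrt (real (Suc b)) - sqrt (real b)) + 2 * (sqrt (real b) - sqrt (real a))"
    using sqrt_step[of b] step by linarith
  finally show ?case by simp
qed

lemma sqrt_diff_le: "a \<le> b \<Longrightarrow> 0 < b \<Longrightarrow> sqrt (real b) - sqrt (real a) \<le> (real b - real a) / sqrt (real b)"
proof -
  assume ab: "a \<le> b" and b: "0 < b"
  have "sqrt (real a) * sqrt (real a) \<le> sqrt (real a) * sqrt (real b)"
    using ab by (intro mult_left_mono) auto
  then have "(sqrt (real b) - sqrt (real a)) * sqrt (real b) \<le> real b - real a"
    by (simp add: algebra_simps)
  then show ?thesis using b by (simp add: le_divide_eq)
qed

lemma T_bound:
  assumes d: "\<forall>j\<in>{min k m<..max k m}. d j \<le> \<beta> / sqrt (real j)" and \<beta>: "\<beta> \<ge> 0" and m: "m > 0"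
  shows "(\<Sum>j\<in>{min k m<..max k m}. d j) \<le> 2 * \<beta> * \<bar>real k - real m\<bar> / sqrt (real m)"
proof -
  define a where "a = min k m"
  define b where "b = max k m"
  have ab: "a \<le> b" "m \<le> b" "0 < b" using m by (auto simp: a_def b_def)
  have eq: "real b - real a = \<bar>real k - real m\<bar>" by (auto simp: a_def b_def)
  have "(\<Sum>j\<in>{a<..b}. d j) \<le> (\<Sum>j\<in>{a<..b}. \<beta> * (1 / sqrt (real j)))"
    using d by (intro sum_mono) (auto simp: a_def b_def)
  also have "\<dots> = \<beta> * (\<Sum>j\<in>{a<..b}. 1 / sqrt (real j))" by (simp add: sum_distrib_left)
  also have "\<dots> \<le> \<beta> * (2 * ((real b - real a) / sqrt (real b)))"
  proof (intro mult_left_mono)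
    show "(\<Sum>j\<in>{a<..b}. 1 / sqrt (real j)) \<le> 2 * ((real b - real a) / sqrt (real b))"
      using order_trans[OF sqrt_sum[OF ab(1)] mult_left_mono[OF sqrt_diff_le[OF ab(1) ab(3)], of 2]] by simp
  qed (use \<beta> in auto)
  also have "\<dots> \<le> \<beta> * (2 * ((real b - real a) / sqrt (real m)))"
    using \<beta> ab m by (intro mult_left_mono divide_left_mono) (auto simp: mult_pos_pos)
  finally show ?thesis unfolding a_def[symmetric] b_def[symmetric] eq by (simp add: algebra_simps)
qed

lemma t_le: "(t::real) \<ge> 0 \<Longrightarrow> t \<le> t^2 + 1"
proof (cases "t \<le> 1")
  case True then show ?thesis by (smt (verit) zero_le_power2)
next
  case False
  then have "t * 1 \<le> t * t" by (intro mult_left_mono) auto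
  then show ?thesis by (simp add: power2_eq_square)
qed



lemma per_k_bound:
  assumes d: "\<forall>j. d j \<ge> 0" and B: "\<forall>j. sqrt (real j) * d j \<le> B" and B0: "B > 0"
    and J: "\<forall>j\<ge>J. sqrt (real j) * d j \<le> \<epsilon>" and e: "\<epsilon> > 0"
    and m: "m \<ge> 2 * J" "m \<ge> 1"
  shows "(\<Sum>j\<in>{min k m<..max k m}. d j)
     \<le> (2*\<epsilon>/real m + 4*B/(real m * sqrt (real m))) * (real k - real m)^2 + 2*\<epsilon>"
proof -
  define x where "x = real k - real m"
  define sm where "sm = sqrt (real m)"
  have sm: "sm > 0" "sm^2 = real m" using m by (auto simp: sm_def)
  have mpos: "m > 0" using m by simp
  have nonneg: "0 \<le> 4*B/(real m * sqrt (real m)) * x^2" "0 \<le> 2*\<epsilon>/real m * x^2"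
    using B0 e m by auto
  show ?thesis
  proof (cases "2 * k \<ge> m")
    case True
    have "\<forall>j\<in>{min k m<..max k m}. d j \<le> \<epsilon> / sqrt (real j)"
    proof
      fix j assume j: "j \<in> {min k m<..max k m}"
      then have "j \<ge> J" using True m by auto
      then have "sqrt (real j) * d j \<le> \<epsilon>" using J by blast
      moreover have "j > 0" using j by auto
      ultimately show "d j \<le> \<epsilon> / sqrt (real j)" by (simp add: le_divide_eq mult.commute)
    qed
    from T_bound[OF this _ mpos] e
    have T: "(\<Sum>j\<in>{min k m<..max k m}. d j) \<le> 2 * \<epsilon> * (\<bar>x\<bar> / sm)" by (simp add: x_def sm_def)
    have "\<bar>x\<bar> / sm \<le> (\<bar>x\<bar> / sm)^2 + 1" using t_le sm by simp
    also have "(\<bar>x\<bar> / sm)^2 = x^2 / real m" using sm by (simp add: power_divide)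
    finally have "2 * \<epsilon> * (\<bar>x\<bar> / sm) \<le> 2 * \<epsilon> * (x^2 / real m + 1)" using e by (intro mult_left_mono) auto
    also have "\<dots> = 2*\<epsilon>/real m * x^2 + 2*\<epsilon>" by (simp add: algebra_simps)
    finally show ?thesis using T nonneg unfolding x_def[symmetric] by (simp add: algebra_simps)
  next
    case False
    have "\<forall>j\<in>{min k m<..max k m}. d j \<le> B / sqrt (real j)"
    proof
      fix j assume j: "j \<in> {min k m<..max k m}"
      have "sqrt (real j) * d j \<le> B" using B by blast
      moreover have "j > 0" using j by auto
      ultimately show "d j \<le> B / sqrt (real j)" by (simp add: le_divide_eq mult.commute)
    qed
    from T_bound[OF this _ mpos] B0
    have T: "(\<Sum>j\<in>{min k m<..max k m}. d j) \<le> 2 * B * \<bar>x\<bar> / sm" by (simp add: x_def sm_def)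
    have ax: "real m < 2 * \<bar>x\<bar>" using False by (simp add: x_def)
    have "\<bar>x\<bar> * real m \<le> \<bar>x\<bar> * (2 * \<bar>x\<bar>)" using ax by (intro mult_left_mono) auto
    then have "\<bar>x\<bar> \<le> 2 * x^2 / real m" using mpos by (simp add: le_divide_eq power2_eq_square algebra_simps)
    then have "2 * B * \<bar>x\<bar> / sm \<le> 2 * B * (2 * x^2 / real m) / sm"
      using B0 sm by (intro divide_right_mono mult_left_mono) auto
    also have "\<dots> = 4*B/(real m * sqrt (real m)) * x^2" by (simp add: sm_def)
    finally show ?thesis using T nonneg e unfolding x_def[symmetric] distrib_right by linarith
  qed
qed

lemma tauber_real:
  assumes p: "p > 0" and d: "\<forall>j. d j \<ge> 0" and lim: "(\<lambda>j. sqrt (real j) * d j) \<longlonglongrightarrow> 0"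
  shows "(\<lambda>m. \<Sum>k\<le>nn p m. cw p (nn p m) k * (\<Sum>j\<in>{min k m<..max k m}. d j)) \<longlonglongrightarrow> 0"
proof (rule LIMSEQ_I)
  fix r :: real assume r: "r > 0"
  obtain B where B0: "B > 0" and Bn: "\<And>j. norm (sqrt (real j) * d j) \<le> B"
    using convergent_imp_Bseq[OF convergentI[OF lim]] by (auto simp: Bseq_def)
  have B: "\<forall>j. sqrt (real j) * d j \<le> B" using Bn by (auto intro: order_trans[OF abs_ge_self])
  define \<epsilon> where "\<epsilon> = r / 10"
  have e: "\<epsilon> > 0" using r by (simp add: \<epsilon>_def)
  obtain J where J0: "\<forall>j\<ge>J. norm (sqrt (real j) * d j - 0) < \<epsilon>" using LIMSEQ_D[OF lim e] by blast
  have J: "\<forall>j\<ge>J. sqrt (real j) * d j \<le> \<epsilon>" using J0 by auto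
  define M0 where "M0 = nat \<lceil>(12 * B / \<epsilon>)^2\<rceil> + 1"
  show "\<exists>no. \<forall>m\<ge>no. norm ((\<Sum>k\<le>nn p m. cw p (nn p m) k * (\<Sum>j\<in>{min k m<..max k m}. d j)) - 0) < r"
  proof (intro exI allI impI)
    fix m assume mno: "max (max (2*J) 1) M0 \<le> m"
    then have m: "m \<ge> 2 * J" "m \<ge> 1" "m \<ge> M0" by auto
    define n where "n = nn p m"
    define K where "K = 2*\<epsilon>/real m + 4*B/(real m * sqrt (real m))"
    have K0: "K \<ge> 0" using e B0 by (simp add: K_def)
    have sm: "sqrt (real m) > 12 * B / \<epsilon>"
    proof -
      have "(12 * B / \<epsilon>)^2 < real m" using m(3) unfolding M0_def by linarith
      then have "sqrt ((12 * B / \<epsilon>)^2) < sqrt (real m)" by (rule real_sqrt_less_mono)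
      then show ?thesis using B0 e by simp
    qed
    have smpos: "sqrt (real m) > 0" using m by simp
    have T0: "0 \<le> (\<Sum>j\<in>{min k m<..max k m}. d j)" for k using d by (simp add: sum_nonneg)
    have "(\<Sum>k\<le>n. cw p n k * (\<Sum>j\<in>{min k m<..max k m}. d j))
        \<le> (\<Sum>k\<le>n. cw p n k * (K * (real k - real m)^2 + 2*\<epsilon>))"
      using per_k_bound[OF d B B0 J e m(1) m(2)] cw_nonneg[OF p]
      by (intro sum_mono mult_left_mono) (auto simp: K_def)
    also have "\<dots> = K * (\<Sum>k\<le>n. cw p n k * (real k - real m)^2) + 2*\<epsilon> * (\<Sum>k\<le>n. cw p n k)"
      by (simp add: algebra_simps sum.distrib sum_distrib_left)
    also have "\<dots> \<le> K * (3 * real m) + 2*\<epsilon>"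
      using S_bound[OF p m(2)] cw_sum[OF p] K0 unfolding n_def by (simp add: mult_left_mono)
    also have "\<dots> = 6*\<epsilon> + 12*B / sqrt (real m) + 2*\<epsilon>"
      using m smpos by (simp add: K_def field_simps)
    also have "12*B / sqrt (real m) < \<epsilon>"
      using sm smpos e by (simp add: divide_less_eq mult.commute pos_divide_less_eq)
    finally have "(\<Sum>k\<le>n. cw p n k * (\<Sum>j\<in>{min k m<..max k m}. d j)) < r"
      using r unfolding \<epsilon>_def by linarith
    moreover have "0 \<le> (\<Sum>k\<le>n. cw p n k * (\<Sum>j\<in>{min k m<..max k m}. d j))"
      using T0 cw_nonneg[OF p] by (simp add: sum_nonneg)
    ultimately show "norm ((\<Sum>k\<le>nn p m. cw p (nn p m) k * (\<Sum>j\<in>{min k m<..max k m}. d j)) - 0) < r"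
      by (simp add: n_def)
  qed
qed



definition fzLU :: "(real \<Rightarrow> real) \<Rightarrow> (real \<Rightarrow> real) \<Rightarrow> bool" where
  "fzLU L U \<longleftrightarrow> (\<forall>\<alpha>. 0 < \<alpha> \<and> \<alpha> \<le> 1 \<longrightarrow> L \<alpha> \<le> U \<alpha>)
   \<and> (\<forall>\<alpha> \<beta>. 0 < \<alpha> \<and> \<alpha> \<le> \<beta> \<and> \<beta> \<le> 1 \<longrightarrow> L \<alpha> \<le> L \<beta> \<and> U \<beta> \<le> U \<alpha>)
   \<and> (\<forall>\<alpha> \<epsilon>. 0 < \<alpha> \<and> \<alpha> \<le> 1 \<and> 0 < \<epsilon> \<longrightarrow> (\<exists>\<beta>. 0 < \<beta> \<and> \<beta> < \<alpha> \<and> L \<alpha> - \<epsilon> < L \<beta> \<and> U \<beta> < U \<alpha> + \<epsilon>))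
   \<and> bdd_below (L ` {0<..1}) \<and> bdd_above (U ` {0<..1})"

definition fz :: "(real \<Rightarrow> real) \<Rightarrow> (real \<Rightarrow> real) \<Rightarrow> (real \<Rightarrow> real) \<Rightarrow> bool" where
  "fz u L U \<longleftrightarrow> fzLU L U \<and> (\<forall>\<alpha>. 0 < \<alpha> \<and> \<alpha> \<le> 1 \<longrightarrow> level u \<alpha> = {L \<alpha>..U \<alpha>})"

lemma level_pos: "\<alpha> > 0 \<Longrightarrow> level u \<alpha> = {t. \<alpha> \<le> u t}"
  by (simp add: level_def)

lemma supp_union: "{t. u t > 0} = (\<Union>\<alpha>\<in>{0<..1}. level u \<alpha>)"
proof safe
  fix t assume "u t > 0"
  then have "min (u t) 1 \<in> {0<..1}" "t \<in> level u (min (u t) 1)" by (auto simp: level_pos)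
  then show "t \<in> (\<Union>\<alpha>\<in>{0<..1}. level u \<alpha>)" by blast
next
  fix t \<alpha> assume "\<alpha> \<in> {0<..(1::real)}" "t \<in> level u \<alpha>"
  then show "0 < u t" by (auto simp: level_pos)
qed

lemma constr_level:
  assumes h: "fzLU L U" and a: "0 < \<alpha>" "\<alpha> \<le> 1"
    and w: "\<And>t. w t = Sup ({0} \<union> {\<beta>. 0 < \<beta> \<and> \<beta> \<le> 1 \<and> L \<beta> \<le> t \<and> t \<le> U \<beta>})"
  shows "level w \<alpha> = {L \<alpha>..U \<alpha>}"
proof -
  note hh = h[unfolded fzLU_def]
  have bdd: "bdd_above ({0} \<union> {\<beta>. 0 < \<beta> \<and> \<beta> \<le> 1 \<and> L \<beta> \<le> t \<and> t \<le> U \<beta>})" for t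
    by (rule bdd_aboveI[of _ 1]) auto
  show ?thesis
  proof (intro set_eqI iffI)
    fix t assume "t \<in> {L \<alpha>..U \<alpha>}"
    then have "\<alpha> \<in> {0} \<union> {\<beta>. 0 < \<beta> \<and> \<beta> \<le> 1 \<and> L \<beta> \<le> t \<and> t \<le> U \<beta>}" using a by auto
    then have "\<alpha> \<le> w t" unfolding w by (rule cSup_upper[OF _ bdd])
    then show "t \<in> level w \<alpha>" using a by (simp add: level_pos)
  next
    fix t assume "t \<in> level w \<alpha>"
    then have le: "\<alpha> \<le> w t" using a by (simp add: level_pos)
    show "t \<in> {L \<alpha>..U \<alpha>}"
    proof (rule ccontr)
      assume "t \<notin> {L \<alpha>..U \<alpha>}"
      then have "t < L \<alpha> \<or> U \<alpha> < t" by auto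
      then obtain \<beta> where b: "0 < \<beta>" "\<beta> < \<alpha>" "t < L \<beta> \<or> U \<beta> < t"
      proof
        assume "t < L \<alpha>"
        then obtain \<beta> where "0 < \<beta>" "\<beta> < \<alpha>" "L \<alpha> - (L \<alpha> - t) < L \<beta>"
          using hh a by (metis diff_gt_0_iff_gt)
        then show ?thesis using that by auto
      next
        assume "U \<alpha> < t"
        then obtain \<beta> where "0 < \<beta>" "\<beta> < \<alpha>" "U \<beta> < U \<alpha> + (t - U \<alpha>)"
          using hh a by (metis diff_gt_0_iff_gt)
        then show ?thesis using that by auto
      qed
      have "w t \<le> \<beta>" unfolding w
      proof (rule cSup_least)
        fix x assume x: "x \<in> {0} \<union> {\<beta>. 0 < \<beta> \<and> \<beta> \<le> 1 \<and> L \<beta> \<le> t \<and> t \<le> U \<beta>}"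
        show "x \<le> \<beta>"
        proof (rule ccontr)
          assume "\<not> x \<le> \<beta>"
          then have "\<beta> \<le> x" "x \<noteq> 0" using b by auto
          then have "0 < x" "x \<le> 1" "L x \<le> t" "t \<le> U x" using x by auto
          then have "L \<beta> \<le> L x" "U x \<le> U \<beta>" using hh b \<open>\<beta> \<le> x\<close> by blast+
          then show False using b \<open>L x \<le> t\<close> \<open>t \<le> U x\<close> by linarith
        qed
      qed auto
      then show False using le b by linarith
    qed
  qed
qed

lemma fz_lower: "fz u L U \<Longrightarrow> 0 < \<alpha> \<Longrightarrow> \<alpha> \<le> 1 \<Longrightarrow> lowerE u \<alpha> = L \<alpha> \<and> upperE u \<alpha> = U \<alpha>"
  unfolding fz_def fzLU_def lowerE_def upperE_def by auto

lemma fz_zero: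
  assumes h: "fz u L U"
  shows "lowerE u 0 = Inf (L ` {0<..1}) \<and> upperE u 0 = Sup (U ` {0<..1})"
proof -
  note hh = h[unfolded fz_def fzLU_def]
  define S where "S = (\<Union>\<alpha>\<in>{0<..(1::real)}. {L \<alpha>..U \<alpha>})"
  define I where "I = Inf (L ` {0<..1})"
  define M where "M = Sup (U ` {0<..1})"
  have ne: "{0<..(1::real)} \<noteq> {}" by auto
  have lev0: "level u 0 = closure S"
  proof -
    have "{t. u t > 0} = S" unfolding supp_union S_def using hh by auto
    then show ?thesis by (simp add: level_def)
  qed
  have IL: "I \<le> L \<alpha>" if "\<alpha> \<in> {0<..1}" for \<alpha> unfolding I_def using hh that by (intro cInf_lower) auto
  have MU: "U \<alpha> \<le> M" if "\<alpha> \<in> {0<..1}" for \<alpha> unfolding M_def using hh that by (intro cSup_upper) auto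
  have sub: "closure S \<subseteq> {I..M}"
  proof (rule closure_minimal)
    show "S \<subseteq> {I..M}" unfolding S_def using IL MU by fastforce
  qed simp
  have Iin: "I \<in> closure S"
    unfolding closure_approachable
  proof (intro allI impI)
    fix e :: real assume e: "e > 0"
    obtain x where x: "x \<in> L ` {0<..1}" "x < I + e"
      using cInf_lessD[of "L ` {0<..1}" "I + e"] e ne unfolding I_def by auto
    then obtain \<alpha> where "\<alpha> \<in> {0<..1}" "x = L \<alpha>" by auto
    then have "x \<in> S" using hh unfolding S_def by auto
    moreover have "dist x I < e" using x IL \<open>x = L \<alpha>\<close> \<open>\<alpha> \<in> {0<..1}\<close> by (auto simp: dist_real_def)
    ultimately show "\<exists>y\<in>S. dist y I < e" by blast
  qed
  have Min: "M \<in> closure S"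
    unfolding closure_approachable
  proof (intro allI impI)
    fix e :: real assume e: "e > 0"
    obtain x where x: "x \<in> U ` {0<..1}" "M - e < x"
      using less_cSupD[of "U ` {0<..1}" "M - e"] e ne unfolding M_def by auto
    then obtain \<alpha> where "\<alpha> \<in> {0<..1}" "x = U \<alpha>" by auto
    then have "x \<in> S" using hh unfolding S_def by auto
    moreover have "dist x M < e" using x MU \<open>x = U \<alpha>\<close> \<open>\<alpha> \<in> {0<..1}\<close> by (auto simp: dist_real_def)
    ultimately show "\<exists>y\<in>S. dist y M < e" by blast
  qed
  have "Inf (closure S) = I" using Iin sub by (intro cInf_eq_minimum) auto
  moreover have "Sup (closure S) = M" using Min sub by (intro cSup_eq_maximum) auto
  ultimately show ?thesis unfolding lowerE_def upperE_def lev0 I_def M_def by simp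
qed

lemma fz_bounded:
  assumes h: "fz u L U"
  shows "\<exists>B. \<forall>\<alpha>\<in>{0..1}. \<bar>lowerE u \<alpha>\<bar> \<le> B \<and> \<bar>upperE u \<alpha>\<bar> \<le> B"
proof -
  note hh = h[unfolded fz_def fzLU_def]
  define I where "I = Inf (L ` {0<..1})"
  define M where "M = Sup (U ` {0<..1})"
  have IL: "I \<le> L \<alpha>" if "\<alpha> \<in> {0<..1}" for \<alpha> unfolding I_def using hh that by (intro cInf_lower) auto
  have MU: "U \<alpha> \<le> M" if "\<alpha> \<in> {0<..1}" for \<alpha> unfolding M_def using hh that by (intro cSup_upper) auto
  have LU: "L \<alpha> \<le> U \<alpha>" if "\<alpha> \<in> {0<..1}" for \<alpha> using hh that by auto
  have IM: "I \<le> M" using IL[of 1] MU[of 1] LU[of 1] by auto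
  show ?thesis
  proof (intro exI ballI)
    fix \<alpha> :: real assume a: "\<alpha> \<in> {0..1}"
    show "\<bar>lowerE u \<alpha>\<bar> \<le> \<bar>I\<bar> + \<bar>M\<bar> \<and> \<bar>upperE u \<alpha>\<bar> \<le> \<bar>I\<bar> + \<bar>M\<bar>"
    proof (cases "\<alpha> = 0")
      case True
      then show ?thesis using fz_zero[OF h] by (simp add: I_def[symmetric] M_def[symmetric])
    next
      case False
      then have a': "\<alpha> \<in> {0<..1}" using a by auto
      then show ?thesis using fz_lower[OF h] IL[OF a'] MU[OF a'] LU[OF a'] by auto
    qed
  qed
qed



lemma fzLU_add:
  assumes h1: "fzLU L1 U1" and h2: "fzLU L2 U2"
  shows "fzLU (\<lambda>\<alpha>. L1 \<alpha> + L2 \<alpha>) (\<lambda>\<alpha>. U1 \<alpha> + U2 \<alpha>)"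
proof -
  note a = h1[unfolded fzLU_def] and b = h2[unfolded fzLU_def]
  have lc: "\<exists>\<beta>. 0 < \<beta> \<and> \<beta> < \<alpha> \<and> L1 \<alpha> + L2 \<alpha> - \<epsilon> < L1 \<beta> + L2 \<beta> \<and> U1 \<beta> + U2 \<beta> < U1 \<alpha> + U2 \<alpha> + \<epsilon>"
    if al: "0 < \<alpha>" "\<alpha> \<le> 1" and e: "0 < \<epsilon>" for \<alpha> \<epsilon>
  proof -
    obtain \<beta>1 where b1: "0 < \<beta>1" "\<beta>1 < \<alpha>" "L1 \<alpha> - \<epsilon>/2 < L1 \<beta>1" "U1 \<beta>1 < U1 \<alpha> + \<epsilon>/2"
      using a al e by (meson half_gt_zero)
    obtain \<beta>2 where b2: "0 < \<beta>2" "\<beta>2 < \<alpha>" "L2 \<alpha> - \<epsilon>/2 < L2 \<beta>2" "U2 \<beta>2 < U2 \<alpha> + \<epsilon>/2"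
      using b al e by (meson half_gt_zero)
    define \<beta> where "\<beta> = max \<beta>1 \<beta>2"
    have "L1 \<beta>1 \<le> L1 \<beta> \<and> U1 \<beta> \<le> U1 \<beta>1" using a b1 b2 al unfolding \<beta>_def
      by (metis max.cobounded1 max_less_iff_conj order_less_imp_le order_less_le_trans)
    moreover have "L2 \<beta>2 \<le> L2 \<beta> \<and> U2 \<beta> \<le> U2 \<beta>2" using b b1 b2 al unfolding \<beta>_def
      by (metis max.cobounded2 max_less_iff_conj order_less_imp_le order_less_le_trans)
    moreover have "0 < \<beta>" "\<beta> < \<alpha>" using b1 b2 by (auto simp: \<beta>_def)
    ultimately show ?thesis using b1 b2 by (intro exI[of _ \<beta>]) auto
  qed
  have bb: "bdd_below ((\<lambda>\<alpha>. L1 \<alpha> + L2 \<alpha>) ` {0<..1})"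
  proof -
    obtain m1 where "\<forall>x\<in>{0<..1}. m1 \<le> L1 x" using a by (auto simp: bdd_below_def)
    moreover obtain m2 where "\<forall>x\<in>{0<..1}. m2 \<le> L2 x" using b by (auto simp: bdd_below_def)
    ultimately show ?thesis by (intro bdd_belowI[of _ "m1 + m2"]) (auto intro: add_mono)
  qed
  have ba: "bdd_above ((\<lambda>\<alpha>. U1 \<alpha> + U2 \<alpha>) ` {0<..1})"
  proof -
    obtain m1 where "\<forall>x\<in>{0<..1}. U1 x \<le> m1" using a by (auto simp: bdd_above_def)
    moreover obtain m2 where "\<forall>x\<in>{0<..1}. U2 x \<le> m2" using b by (auto simp: bdd_above_def)
    ultimately show ?thesis by (intro bdd_aboveI[of _ "m1 + m2"]) (auto intro: add_mono)
  qed
  show ?thesis unfolding fzLU_def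
    using a b lc bb ba by (auto intro: add_mono)
qed

lemma fzLU_scale:
  assumes h: "fzLU L U" and c: "c \<ge> 0"
  shows "fzLU (\<lambda>\<alpha>. c * L \<alpha>) (\<lambda>\<alpha>. c * U \<alpha>)"
proof (cases "c = 0")
  case True
  then show ?thesis unfolding fzLU_def by (auto intro: exI[of _ "\<alpha>/2" for \<alpha>])
next
  case False
  then have cp: "c > 0" using c by simp
  note a = h[unfolded fzLU_def]
  have lc: "\<exists>\<beta>. 0 < \<beta> \<and> \<beta> < \<alpha> \<and> c * L \<alpha> - \<epsilon> < c * L \<beta> \<and> c * U \<beta> < c * U \<alpha> + \<epsilon>"
    if al: "0 < \<alpha>" "\<alpha> \<le> 1" and e: "0 < \<epsilon>" for \<alpha> \<epsilon>
  proof -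
    obtain \<beta> where b: "0 < \<beta>" "\<beta> < \<alpha>" "L \<alpha> - \<epsilon>/c < L \<beta>" "U \<beta> < U \<alpha> + \<epsilon>/c"
      using a al e cp by (meson divide_pos_pos)
    have "c * (L \<alpha> - \<epsilon>/c) < c * L \<beta>" "c * U \<beta> < c * (U \<alpha> + \<epsilon>/c)"
      using b cp by (auto intro: mult_strict_left_mono)
    then show ?thesis using b cp by (intro exI[of _ \<beta>]) (auto simp: algebra_simps)
  qed
  have bb: "bdd_below ((\<lambda>\<alpha>. c * L \<alpha>) ` {0<..1})"
  proof -
    obtain m1 where "\<forall>x\<in>{0<..1}. m1 \<le> L x" using a by (auto simp: bdd_below_def)
    then show ?thesis using c by (intro bdd_belowI[of _ "c * m1"]) (auto intro: mult_left_mono)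
  qed
  have ba: "bdd_above ((\<lambda>\<alpha>. c * U \<alpha>) ` {0<..1})"
  proof -
    obtain m1 where "\<forall>x\<in>{0<..1}. U x \<le> m1" using a by (auto simp: bdd_above_def)
    then show ?thesis using c by (intro bdd_aboveI[of _ "c * m1"]) (auto intro: mult_left_mono)
  qed
  show ?thesis unfolding fzLU_def
    using a lc bb ba c by (auto intro: mult_left_mono)
qed

lemma fz_plus:
  assumes h1: "fz u L1 U1" and h2: "fz v L2 U2"
  shows "fz (fplus u v) (\<lambda>\<alpha>. L1 \<alpha> + L2 \<alpha>) (\<lambda>\<alpha>. U1 \<alpha> + U2 \<alpha>)"
proof -
  have LU: "fzLU (\<lambda>\<alpha>. L1 \<alpha> + L2 \<alpha>) (\<lambda>\<alpha>. U1 \<alpha> + U2 \<alpha>)"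
    using fzLU_add h1 h2 unfolding fz_def by blast
  have w: "fplus u v t = Sup ({0} \<union> {\<beta>. 0 < \<beta> \<and> \<beta> \<le> 1 \<and> L1 \<beta> + L2 \<beta> \<le> t \<and> t \<le> U1 \<beta> + U2 \<beta>})" for t
  proof -
    have "{\<alpha>. 0 < \<alpha> \<and> \<alpha> \<le> 1 \<and> (\<exists>a b. a \<in> level u \<alpha> \<and> b \<in> level v \<alpha> \<and> t = a + b)}
        = {\<beta>. 0 < \<beta> \<and> \<beta> \<le> 1 \<and> L1 \<beta> + L2 \<beta> \<le> t \<and> t \<le> U1 \<beta> + U2 \<beta>}"
    proof (intro set_eqI iffI)
      fix \<alpha> assume "\<alpha> \<in> {\<alpha>. 0 < \<alpha> \<and> \<alpha> \<le> 1 \<and> (\<exists>a b. a \<in> level u \<alpha> \<and> b \<in> level v \<alpha> \<and> t = a + b)}"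
      then show "\<alpha> \<in> {\<beta>. 0 < \<beta> \<and> \<beta> \<le> 1 \<and> L1 \<beta> + L2 \<beta> \<le> t \<and> t \<le> U1 \<beta> + U2 \<beta>}"
        using h1 h2 unfolding fz_def by auto
    next
      fix \<alpha> assume al: "\<alpha> \<in> {\<beta>. 0 < \<beta> \<and> \<beta> \<le> 1 \<and> L1 \<beta> + L2 \<beta> \<le> t \<and> t \<le> U1 \<beta> + U2 \<beta>}"
      define a where "a = max (L1 \<alpha>) (t - U2 \<alpha>)"
      have "L1 \<alpha> \<le> U1 \<alpha>" "L2 \<alpha> \<le> U2 \<alpha>" using h1 h2 al unfolding fz_def fzLU_def by auto
      then have "a \<in> level u \<alpha>" "t - a \<in> level v \<alpha>" using h1 h2 al unfolding fz_def a_def by auto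
      then show "\<alpha> \<in> {\<alpha>. 0 < \<alpha> \<and> \<alpha> \<le> 1 \<and> (\<exists>a b. a \<in> level u \<alpha> \<and> b \<in> level v \<alpha> \<and> t = a + b)}"
        using al by force
    qed
    then show ?thesis unfolding fplus_def by simp
  qed
  show ?thesis unfolding fz_def using LU constr_level[OF LU _ _ w] by blast
qed

lemma fz_scale:
  assumes h: "fz u L U" and c: "c \<ge> 0"
  shows "fz (fscale c u) (\<lambda>\<alpha>. c * L \<alpha>) (\<lambda>\<alpha>. c * U \<alpha>)"
proof -
  have LU: "fzLU (\<lambda>\<alpha>. c * L \<alpha>) (\<lambda>\<alpha>. c * U \<alpha>)" using fzLU_scale h c unfolding fz_def by blast
  have w: "fscale c u t = Sup ({0} \<union> {\<beta>. 0 < \<beta> \<and> \<beta> \<le> 1 \<and> c * L \<beta> \<le> t \<and> t \<le> c * U \<beta>})" for t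
  proof -
    have "{\<alpha>. 0 < \<alpha> \<and> \<alpha> \<le> 1 \<and> (\<exists>a. a \<in> level u \<alpha> \<and> t = c * a)}
        = {\<beta>. 0 < \<beta> \<and> \<beta> \<le> 1 \<and> c * L \<beta> \<le> t \<and> t \<le> c * U \<beta>}"
    proof (intro set_eqI iffI)
      fix \<alpha> assume "\<alpha> \<in> {\<alpha>. 0 < \<alpha> \<and> \<alpha> \<le> 1 \<and> (\<exists>a. a \<in> level u \<alpha> \<and> t = c * a)}"
      then show "\<alpha> \<in> {\<beta>. 0 < \<beta> \<and> \<beta> \<le> 1 \<and> c * L \<beta> \<le> t \<and> t \<le> c * U \<beta>}"
        using h c unfolding fz_def by (auto intro: mult_left_mono)
    next
      fix \<alpha> assume al: "\<alpha> \<in> {\<beta>. 0 < \<beta> \<and> \<beta> \<le> 1 \<and> c * L \<beta> \<le> t \<and> t \<le> c * U \<beta>}"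
      have LUa: "L \<alpha> \<le> U \<alpha>" using h al unfolding fz_def fzLU_def by auto
      show "\<alpha> \<in> {\<alpha>. 0 < \<alpha> \<and> \<alpha> \<le> 1 \<and> (\<exists>a. a \<in> level u \<alpha> \<and> t = c * a)}"
      proof (cases "c = 0")
        case True
        then have "L \<alpha> \<in> level u \<alpha>" "t = c * L \<alpha>" using h al LUa unfolding fz_def by auto
        then show ?thesis using al by blast
      next
        case False
        then have cp: "c > 0" using c by simp
        have "L \<alpha> \<le> t / c" "t / c \<le> U \<alpha>" using al cp by (auto simp: field_simps)
        then have "t / c \<in> level u \<alpha>" "t = c * (t / c)" using h al cp unfolding fz_def by auto
        then show ?thesis using al by blast
      qed
    qed
    then show ?thesis unfolding fscale_def by simp
  qed
  show ?thesis unfolding fz_def using LU constr_level[OF LU _ _ w] by blast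
qed

lemma fz_fsum:
  assumes "\<forall>k\<le>n. fz (w k) (Lk k) (Uk k)"
  shows "fz (fsum_upto w n) (\<lambda>\<alpha>. \<Sum>k\<le>n. Lk k \<alpha>) (\<lambda>\<alpha>. \<Sum>k\<le>n. Uk k \<alpha>)"
  using assms
proof (induction n)
  case 0 then show ?case by simp
next
  case (Suc n)
  then have "fz (fsum_upto w n) (\<lambda>\<alpha>. \<Sum>k\<le>n. Lk k \<alpha>) (\<lambda>\<alpha>. \<Sum>k\<le>n. Uk k \<alpha>)" by simp
  from fz_plus[OF this, of "w (Suc n)" "Lk (Suc n)" "Uk (Suc n)"] Suc.prems
  show ?case by simp
qed

lemma fz_fzero: "fz fzero (\<lambda>_. 0) (\<lambda>_. 0)"
  unfolding fz_def fzLU_def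
  by (auto simp: level_pos fzero_def intro: exI[of _ "\<alpha>/2" for \<alpha>] split: if_splits)



lemma E1_level_interval:
  assumes u: "u \<in> E1" and a: "0 < \<alpha>" "\<alpha> \<le> 1"
  shows "level u \<alpha> = {lowerE u \<alpha>..upperE u \<alpha>} \<and> lowerE u \<alpha> \<le> upperE u \<alpha>"
proof -
  note uu = u[unfolded E1_def mem_Collect_eq]
  define S where "S = level u \<alpha>"
  have S: "S = {t. \<alpha> \<le> u t}" using a by (simp add: S_def level_pos)
  obtain t0 where "u t0 = 1" using uu by blast
  then have "t0 \<in> S" using a S by simp
  then have ne: "S \<noteq> {}" by auto
  have sub: "S \<subseteq> closure {t. u t > 0}" using a S closure_subset by fastforce
  have bnd: "bounded S" using uu sub compact_imp_bounded bounded_subset by blast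
  have cl: "closed S"
  proof -
    have "open {t. u t < \<alpha>}" unfolding open_real
    proof
      fix x assume x: "x \<in> {t. u t < \<alpha>}"
      then obtain \<delta> where "\<delta> > 0" "\<forall>y. \<bar>y - x\<bar> < \<delta> \<longrightarrow> u y < u x + (\<alpha> - u x)"
        using uu by (metis diff_gt_0_iff_gt mem_Collect_eq)
      then show "\<exists>\<epsilon>>0. \<forall>x'. \<bar>x' - x\<bar> < \<epsilon> \<longrightarrow> x' \<in> {t. u t < \<alpha>}" by auto
    qed
    then have "closed (- {t. u t < \<alpha>})" by (simp add: closed_def)
    moreover have "- {t. u t < \<alpha>} = S" using S by auto
    ultimately show ?thesis by simp
  qed
  have cv: "convex S" unfolding convex_alt
  proof (intro ballI allI impI)
    fix x y and c :: real assume "x \<in> S" "y \<in> S" "0 \<le> c \<and> c \<le> 1"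
    moreover have cvu: "\<forall>x y c. 0 \<le> c \<and> c \<le> 1 \<longrightarrow> min (u x) (u y) \<le> u (c * x + (1 - c) * y)" using uu by blast
    ultimately have "\<alpha> \<le> min (u x) (u y)" "min (u x) (u y) \<le> u ((1 - c) * x + (1 - (1 - c)) * y)"
      using S cvu[rule_format, of "1-c" x y] by auto
    then have "\<alpha> \<le> u ((1 - c) * x + (1 - (1 - c)) * y)" by (rule order_trans)
    then have "\<alpha> \<le> u ((1 - c) * x + c * y)" by simp
    then show "(1 - c) *\<^sub>R x + c *\<^sub>R y \<in> S" using S by simp
  qed
  have "connected S" using cv by (simp add: convex_connected)
  moreover have "compact S" using bnd cl by (simp add: compact_eq_bounded_closed)
  ultimately obtain a b where ab: "S = {a..b}" using connected_compact_interval_1 by blast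
  then have "a \<le> b" using ne by auto
  then show ?thesis using ab unfolding S_def lowerE_def upperE_def by simp
qed

lemma E1_fz:
  assumes u: "u \<in> E1"
  shows "fz u (lowerE u) (upperE u)"
proof -
  note uu = u[unfolded E1_def mem_Collect_eq]
  note I = E1_level_interval[OF u]
  have mono: "lowerE u \<alpha> \<le> lowerE u \<beta> \<and> upperE u \<beta> \<le> upperE u \<alpha>"
    if "0 < \<alpha>" "\<alpha> \<le> \<beta>" "\<beta> \<le> 1" for \<alpha> \<beta>
  proof -
    have "level u \<beta> \<subseteq> level u \<alpha>" using that by (auto simp: level_pos)
    moreover have "level u \<beta> = {lowerE u \<beta>..upperE u \<beta>}" "lowerE u \<beta> \<le> upperE u \<beta>"
      "level u \<alpha> = {lowerE u \<alpha>..upperE u \<alpha>}" using I[of \<alpha>] I[of \<beta>] that by auto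
    ultimately show ?thesis by simp
  qed
  have "bounded (closure {t. u t > 0})" using uu compact_imp_bounded by blast
  then obtain K where K: "\<forall>x\<in>closure {t. u t > 0}. \<bar>x\<bar> \<le> K"
    unfolding bounded_real by blast
  have inK: "lowerE u \<alpha> \<in> closure {t. u t > 0} \<and> upperE u \<alpha> \<in> closure {t. u t > 0}" if "0 < \<alpha>" "\<alpha> \<le> 1" for \<alpha>
  proof -
    have "level u \<alpha> \<subseteq> closure {t. u t > 0}" using that closure_subset by (fastforce simp: level_pos)
    then show ?thesis using I[OF that] by auto
  qed
  have lc: "\<exists>\<beta>. 0 < \<beta> \<and> \<beta> < \<alpha> \<and> lowerE u \<alpha> - \<epsilon> < lowerE u \<beta> \<and> upperE u \<beta> < upperE u \<alpha> + \<epsilon>"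
    if al: "0 < \<alpha>" "\<alpha> \<le> 1" and e: "0 < \<epsilon>" for \<alpha> \<epsilon>
  proof -
    have key: "t \<in> level u \<alpha>" if h: "\<forall>\<beta>. 0 < \<beta> \<and> \<beta> < \<alpha> \<longrightarrow> t \<in> level u \<beta>" for t
    proof (rule ccontr)
      assume "t \<notin> level u \<alpha>"
      then have ut: "u t < \<alpha>" using al by (simp add: level_pos)
      define \<beta> where "\<beta> = (max (u t) 0 + \<alpha>) / 2"
      have "0 < \<beta>" "\<beta> < \<alpha>" "u t < \<beta>" using ut al by (auto simp: \<beta>_def)
      then show False using h by (auto simp: level_pos)
    qed
    obtain \<beta>1 where b1: "0 < \<beta>1" "\<beta>1 < \<alpha>" "lowerE u \<alpha> - \<epsilon> < lowerE u \<beta>1"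
    proof (rule ccontr)
      assume "\<not> thesis"
      then have nb: "\<forall>\<beta>. 0 < \<beta> \<and> \<beta> < \<alpha> \<longrightarrow> lowerE u \<beta> \<le> lowerE u \<alpha> - \<epsilon>" using that by force
      have "lowerE u \<alpha> - \<epsilon> \<in> level u \<alpha>"
      proof (rule key, intro allI impI)
        fix \<beta> assume b: "0 < \<beta> \<and> \<beta> < \<alpha>"
        have "upperE u \<alpha> \<le> upperE u \<beta>" using mono[of \<beta> \<alpha>] b al by auto
        then show "lowerE u \<alpha> - \<epsilon> \<in> level u \<beta>" using I[of \<beta>] I[OF al] nb b al e by auto
      qed
      then show False using I[OF al] e by auto
    qed
    obtain \<beta>2 where b2: "0 < \<beta>2" "\<beta>2 < \<alpha>" "upperE u \<beta>2 < upperE u \<alpha> + \<epsilon>"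
    proof (rule ccontr)
      assume "\<not> thesis"
      then have nb: "\<forall>\<beta>. 0 < \<beta> \<and> \<beta> < \<alpha> \<longrightarrow> upperE u \<alpha> + \<epsilon> \<le> upperE u \<beta>" using that by force
      have "upperE u \<alpha> + \<epsilon> \<in> level u \<alpha>"
      proof (rule key, intro allI impI)
        fix \<beta> assume b: "0 < \<beta> \<and> \<beta> < \<alpha>"
        have "lowerE u \<beta> \<le> lowerE u \<alpha>" using mono[of \<beta> \<alpha>] b al by auto
        then show "upperE u \<alpha> + \<epsilon> \<in> level u \<beta>" using I[of \<beta>] I[OF al] nb b al e by auto
      qed
      then show False using I[OF al] e by auto
    qed
    define \<beta> where "\<beta> = max \<beta>1 \<beta>2"
    have "0 < \<beta>" "\<beta> < \<alpha>" using b1 b2 by (auto simp: \<beta>_def)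
    moreover have "lowerE u \<beta>1 \<le> lowerE u \<beta>" "upperE u \<beta> \<le> upperE u \<beta>2"
      using mono[of \<beta>1 \<beta>] mono[of \<beta>2 \<beta>] b1 b2 al \<open>\<beta> < \<alpha>\<close> by (auto simp: \<beta>_def)
    ultimately show ?thesis using b1 b2 by (intro exI[of _ \<beta>]) auto
  qed
  have bb: "bdd_below (lowerE u ` {0<..1})"
  proof (rule bdd_belowI[of _ "-K"])
    fix x assume "x \<in> lowerE u ` {0<..1}"
    then obtain \<alpha> where "\<alpha> \<in> {0<..1}" "x = lowerE u \<alpha>" by auto
    then have "\<bar>x\<bar> \<le> K" using inK K by auto
    then show "-K \<le> x" by linarith
  qed
  have ba: "bdd_above (upperE u ` {0<..1})"
  proof (rule bdd_aboveI[of _ "K"])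
    fix x assume "x \<in> upperE u ` {0<..1}"
    then obtain \<alpha> where "\<alpha> \<in> {0<..1}" "x = upperE u \<alpha>" by auto
    then have "\<bar>x\<bar> \<le> K" using inK K by auto
    then show "x \<le> K" by linarith
  qed
  show ?thesis unfolding fz_def fzLU_def
  proof (intro conjI allI impI)
    fix \<alpha> :: real assume "0 < \<alpha> \<and> \<alpha> \<le> 1"
    then show "lowerE u \<alpha> \<le> upperE u \<alpha>" "level u \<alpha> = {lowerE u \<alpha>..upperE u \<alpha>}" using I by auto
  next
    fix \<alpha> \<beta> :: real assume "0 < \<alpha> \<and> \<alpha> \<le> \<beta> \<and> \<beta> \<le> 1"
    then show "lowerE u \<alpha> \<le> lowerE u \<beta>" "upperE u \<beta> \<le> upperE u \<alpha>" using mono by auto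
  next
    fix \<alpha> \<epsilon> :: real assume "0 < \<alpha> \<and> \<alpha> \<le> 1 \<and> 0 < \<epsilon>"
    then show "\<exists>\<beta>>0. \<beta> < \<alpha> \<and> lowerE u \<alpha> - \<epsilon> < lowerE u \<beta> \<and> upperE u \<beta> < upperE u \<alpha> + \<epsilon>"
      using lc by auto
  qed (use bb ba in auto)
qed



lemma Inf_diff:
  fixes f g :: "real \<Rightarrow> real"
  assumes ne: "A \<noteq> {}" and bf: "bdd_below (f ` A)" and bg: "bdd_below (g ` A)"
    and d: "\<forall>a\<in>A. \<bar>f a - g a\<bar> \<le> b"
  shows "\<bar>Inf (f ` A) - Inf (g ` A)\<bar> \<le> b"
proof -
  have "Inf (f ` A) - b \<le> Inf (g ` A)"
  proof (rule cINF_greatest[OF ne])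
    fix a assume a: "a \<in> A"
    have "Inf (f ` A) \<le> f a" using a bf by (intro cINF_lower)
    then show "Inf (f ` A) - b \<le> g a" using d a by force
  qed
  moreover have "Inf (g ` A) - b \<le> Inf (f ` A)"
  proof (rule cINF_greatest[OF ne])
    fix a assume a: "a \<in> A"
    have "Inf (g ` A) \<le> g a" using a bg by (intro cINF_lower)
    then show "Inf (g ` A) - b \<le> f a" using d a by force
  qed
  ultimately show ?thesis by linarith
qed

lemma Sup_diff:
  fixes f g :: "real \<Rightarrow> real"
  assumes ne: "A \<noteq> {}" and bf: "bdd_above (f ` A)" and bg: "bdd_above (g ` A)"
    and d: "\<forall>a\<in>A. \<bar>f a - g a\<bar> \<le> b"
  shows "\<bar>Sup (f ` A) - Sup (g ` A)\<bar> \<le> b"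
proof -
  have "Sup (f ` A) \<le> Sup (g ` A) + b"
  proof (rule cSUP_least[OF ne])
    fix a assume a: "a \<in> A"
    have "g a \<le> Sup (g ` A)" using a bg by (intro cSUP_upper)
    then show "f a \<le> Sup (g ` A) + b" using d a by force
  qed
  moreover have "Sup (g ` A) \<le> Sup (f ` A) + b"
  proof (rule cSUP_least[OF ne])
    fix a assume a: "a \<in> A"
    have "f a \<le> Sup (f ` A)" using a bf by (intro cSUP_upper)
    then show "g a \<le> Sup (f ` A) + b" using d a by force
  qed
  ultimately show ?thesis by linarith
qed

lemma fdist_ge:
  assumes hx: "fz x Lx Ux" and hy: "fz y Ly Uy" and a: "0 < \<alpha>" "\<alpha> \<le> 1"
  shows "\<bar>Lx \<alpha> - Ly \<alpha>\<bar> \<le> fdist x y \<and> \<bar>Ux \<alpha> - Uy \<alpha>\<bar> \<le> fdist x y"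
proof -
  obtain Bx where Bx: "\<forall>\<alpha>\<in>{0..1}. \<bar>lowerE x \<alpha>\<bar> \<le> Bx \<and> \<bar>upperE x \<alpha>\<bar> \<le> Bx" using fz_bounded[OF hx] by blast
  obtain By where By: "\<forall>\<alpha>\<in>{0..1}. \<bar>lowerE y \<alpha>\<bar> \<le> By \<and> \<bar>upperE y \<alpha>\<bar> \<le> By" using fz_bounded[OF hy] by blast
  have bdd: "bdd_above ((\<lambda>\<alpha>. max \<bar>lowerE x \<alpha> - lowerE y \<alpha>\<bar> \<bar>upperE x \<alpha> - upperE y \<alpha>\<bar>) ` {0..1})"
  proof (rule bdd_aboveI[of _ "Bx + By"])
    fix z assume "z \<in> (\<lambda>\<alpha>. max \<bar>lowerE x \<alpha> - lowerE y \<alpha>\<bar> \<bar>upperE x \<alpha> - upperE y \<alpha>\<bar>) ` {0..1}"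
    then obtain \<beta> where b: "\<beta> \<in> {0..1}" "z = max \<bar>lowerE x \<beta> - lowerE y \<beta>\<bar> \<bar>upperE x \<beta> - upperE y \<beta>\<bar>" by auto
    then show "z \<le> Bx + By" using Bx By by fastforce
  qed
  have "max \<bar>lowerE x \<alpha> - lowerE y \<alpha>\<bar> \<bar>upperE x \<alpha> - upperE y \<alpha>\<bar> \<le> fdist x y"
    unfolding fdist_def using a by (intro cSUP_upper[OF _ bdd]) auto
  then show ?thesis using fz_lower[OF hx a] fz_lower[OF hy a] by auto
qed

lemma fdist_le:
  assumes hx: "fz x Lx Ux" and hy: "fz y Ly Uy"
    and d: "\<forall>\<alpha>. 0 < \<alpha> \<and> \<alpha> \<le> 1 \<longrightarrow> \<bar>Lx \<alpha> - Ly \<alpha>\<bar> \<le> b \<and> \<bar>Ux \<alpha> - Uy \<alpha>\<bar> \<le> b"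
  shows "fdist x y \<le> b"
  unfolding fdist_def
proof (rule cSUP_least)
  fix \<alpha> :: real assume a: "\<alpha> \<in> {0..1}"
  show "max \<bar>lowerE x \<alpha> - lowerE y \<alpha>\<bar> \<bar>upperE x \<alpha> - upperE y \<alpha>\<bar> \<le> b"
  proof (cases "\<alpha> = 0")
    case True
    note x = hx[unfolded fz_def fzLU_def] and y = hy[unfolded fz_def fzLU_def]
    have ne: "{0<..(1::real)} \<noteq> {}" by auto
    have "\<bar>Inf (Lx ` {0<..1}) - Inf (Ly ` {0<..1})\<bar> \<le> b"
      using x y d by (intro Inf_diff[OF ne]) auto
    moreover have "\<bar>Sup (Ux ` {0<..1}) - Sup (Uy ` {0<..1})\<bar> \<le> b"
      using x y d by (intro Sup_diff[OF ne]) auto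
    ultimately show ?thesis using fz_zero[OF hx] fz_zero[OF hy] True by simp
  next
    case False
    then have "0 < \<alpha>" "\<alpha> \<le> 1" using a by auto
    then show ?thesis using fz_lower[OF hx] fz_lower[OF hy] d by auto
  qed
qed auto

lemma sum_diff:
  fixes f :: "nat \<Rightarrow> real"
  shows "\<bar>(\<Sum>j\<le>m. f j) - (\<Sum>j\<le>k. f j)\<bar> \<le> (\<Sum>j\<in>{min k m<..max k m}. \<bar>f j\<bar>)"
proof (cases "k \<le> m")
  case True
  have "(\<Sum>j\<le>m. f j) = (\<Sum>j\<le>k. f j) + (\<Sum>j\<in>{k<..m}. f j)"
    using ivl_disj_un_one(3)[OF True] by (metis sum.union_disjoint finite_atMost finite_greaterThanAtMost ivl_disj_int_one(3))
  then show ?thesis using True by (simp add: sum_abs)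
next
  case False
  then have km: "m \<le> k" by simp
  have "(\<Sum>j\<le>k. f j) = (\<Sum>j\<le>m. f j) + (\<Sum>j\<in>{m<..k}. f j)"
    using ivl_disj_un_one(3)[OF km] by (metis sum.union_disjoint finite_atMost finite_greaterThanAtMost ivl_disj_int_one(3))
  then show ?thesis using km by (simp add: sum_abs)
qed

lemma key_est:
  fixes f :: "nat \<Rightarrow> real"
  assumes p: "p > 0" and fd: "\<forall>j. \<bar>f j\<bar> \<le> d j"
  shows "\<bar>(\<Sum>j\<le>m. f j) - (\<Sum>k\<le>n. cw p n k * (\<Sum>j\<le>k. f j))\<bar>
     \<le> (\<Sum>k\<le>n. cw p n k * (\<Sum>j\<in>{min k m<..max k m}. d j))"
proof -
  have "(\<Sum>j\<le>m. f j) = (\<Sum>k\<le>n. cw p n k * (\<Sum>j\<le>m. f j))"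
    by (simp add: sum_distrib_right[symmetric] cw_sum[OF p])
  then have "(\<Sum>j\<le>m. f j) - (\<Sum>k\<le>n. cw p n k * (\<Sum>j\<le>k. f j))
      = (\<Sum>k\<le>n. cw p n k * ((\<Sum>j\<le>m. f j) - (\<Sum>j\<le>k. f j)))"
    by (simp add: sum_subtractf right_diff_distrib)
  also have "\<bar>\<dots>\<bar> \<le> (\<Sum>k\<le>n. \<bar>cw p n k * ((\<Sum>j\<le>m. f j) - (\<Sum>j\<le>k. f j))\<bar>)" by (rule sum_abs)
  also have "\<dots> \<le> (\<Sum>k\<le>n. cw p n k * (\<Sum>j\<in>{min k m<..max k m}. d j))"
  proof (rule sum_mono)
    fix k
    have "\<bar>(\<Sum>j\<le>m. f j) - (\<Sum>j\<le>k. f j)\<bar> \<le> (\<Sum>j\<in>{min k m<..max k m}. \<bar>f j\<bar>)" by (rule sum_diff)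
    also have "\<dots> \<le> (\<Sum>j\<in>{min k m<..max k m}. d j)" using fd by (intro sum_mono) auto
    finally show "\<bar>cw p n k * ((\<Sum>j\<le>m. f j) - (\<Sum>j\<le>k. f j))\<bar> \<le> cw p n k * (\<Sum>j\<in>{min k m<..max k m}. d j)"
      using cw_nonneg[OF p, of n k] by (simp add: abs_mult mult_left_mono)
  qed
  finally show ?thesis .
qed



theorem mainTheorem5:
  fixes p :: real and u :: "nat \<Rightarrow> real \<Rightarrow> real" and \<nu> :: "real \<Rightarrow> real"
  assumes "p > 0"
    and "\<forall>n. u n \<in> E1"
    and "\<nu> \<in> E1"
    and "Ep_summable_to p u \<nu>"
    and "(\<lambda>n. sqrt (real n) * fdist (u n) fzero) \<longlonglongrightarrow> 0"
  shows "(\<lambda>n. fdist (psum u n) \<nu>) \<longlonglongrightarrow> 0"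
proof -
  note p = assms(1)
  have hu: "fz (u j) (lowerE (u j)) (upperE (u j))" for j using E1_fz assms(2) by blast
  have hv: "fz \<nu> (lowerE \<nu>) (upperE \<nu>)" using E1_fz assms(3) by blast
  define l where "l m \<alpha> = (\<Sum>j\<le>m. lowerE (u j) \<alpha>)" for m \<alpha>
  define r where "r m \<alpha> = (\<Sum>j\<le>m. upperE (u j) \<alpha>)" for m \<alpha>
  have hs: "fz (psum u m) (l m) (r m)" for m
    unfolding psum_def l_def[abs_def] r_def[abs_def] using hu by (intro fz_fsum) auto
  have he: "fz (euler_mean p (psum u) n) (\<lambda>\<alpha>. \<Sum>k\<le>n. cw p n k * l k \<alpha>) (\<lambda>\<alpha>. \<Sum>k\<le>n. cw p n k * r k \<alpha>)" for n
    unfolding euler_mean_def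
  proof (intro fz_fsum allI impI)
    fix k assume "k \<le> n"
    show "fz (fscale (real (n choose k) * p ^ (n - k) / (p + 1) ^ n) (psum u k)) (\<lambda>\<alpha>. cw p n k * l k \<alpha>) (\<lambda>\<alpha>. cw p n k * r k \<alpha>)"
      using fz_scale[OF hs cw_nonneg[OF p, of n k]] by (simp add: cw_def)
  qed
  define d where "d j = fdist (u j) fzero" for j
  have dge: "\<bar>lowerE (u j) \<alpha>\<bar> \<le> d j \<and> \<bar>upperE (u j) \<alpha>\<bar> \<le> d j" if "0 < \<alpha>" "\<alpha> \<le> 1" for j \<alpha>
    using fdist_ge[OF hu fz_fzero that] by (simp add: d_def)
  have d0: "\<forall>j. 0 \<le> d j" using dge[of 1] by (meson abs_ge_zero order_trans zero_less_one order_refl)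
  define R where "R m = (\<Sum>k\<le>nn p m. cw p (nn p m) k * (\<Sum>j\<in>{min k m<..max k m}. d j))" for m
  have RL: "R \<longlonglongrightarrow> 0" unfolding R_def using tauber_real[OF p d0] assms(5) by (simp add: d_def)
  define e where "e n = fdist (euler_mean p (psum u) n) \<nu>" for n
  have eL: "e \<longlonglongrightarrow> 0" using assms(4) unfolding Ep_summable_to_def e_def[abs_def] by simp
  have nnL: "filterlim (nn p) at_top at_top"
    using filterlim_at_top_mono[OF filterlim_ident, of "nn p"] nn_ge[OF p] by simp
  have eL2: "(\<lambda>m. e (nn p m)) \<longlonglongrightarrow> 0" using filterlim_compose[OF eL nnL] by (simp add: o_def)
  have bound: "fdist (psum u m) \<nu> \<le> R m + e (nn p m)" for m
  proof (rule fdist_le[OF hs hv], intro allI impI)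
    fix \<alpha> :: real assume a: "0 < \<alpha> \<and> \<alpha> \<le> 1"
    define n where "n = nn p m"
    have E: "\<bar>(\<Sum>k\<le>n. cw p n k * l k \<alpha>) - lowerE \<nu> \<alpha>\<bar> \<le> e n \<and> \<bar>(\<Sum>k\<le>n. cw p n k * r k \<alpha>) - upperE \<nu> \<alpha>\<bar> \<le> e n"
      using fdist_ge[OF he hv] a by (simp add: e_def)
    have K1: "\<bar>l m \<alpha> - (\<Sum>k\<le>n. cw p n k * l k \<alpha>)\<bar> \<le> R m"
      unfolding l_def R_def n_def[symmetric] using dge a by (intro key_est[OF p]) auto
    have K2: "\<bar>r m \<alpha> - (\<Sum>k\<le>n. cw p n k * r k \<alpha>)\<bar> \<le> R m"
      unfolding r_def R_def n_def[symmetric] using dge a by (intro key_est[OF p]) auto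
    show "\<bar>l m \<alpha> - lowerE \<nu> \<alpha>\<bar> \<le> R m + e (nn p m) \<and> \<bar>r m \<alpha> - upperE \<nu> \<alpha>\<bar> \<le> R m + e (nn p m)"
      using E K1 K2 unfolding n_def by linarith
  qed
  have nonneg: "0 \<le> fdist (psum u m) \<nu>" for m
    using fdist_ge[OF hs hv, of 1] by (meson abs_ge_zero order_trans zero_less_one order_refl)
  have "(\<lambda>m. R m + e (nn p m)) \<longlonglongrightarrow> 0" using tendsto_add[OF RL eL2] by simp
  show ?thesis
  proof (rule tendsto_sandwich[of "\<lambda>_. 0" _ _ "\<lambda>m. R m + e (nn p m)"])
    show "\<forall>\<^sub>F n in sequentially. 0 \<le> fdist (psum u n) \<nu>" using nonneg by simp
    show "\<forall>\<^sub>F n in sequentially. fdist (psum u n) \<nu> \<le> R n + e (nn p n)" using bound by simp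
  qed (use \<open>(\<lambda>m. R m + e (nn p m)) \<longlonglongrightarrow> 0\<close> in auto)
qed

end
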